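(* Let $X$ be a separated locally convex space and $g\colon X\to\mathbb R^{\vartriangle}$ closed and convex (possibly improper). Then $g^{**}=g$, where $$g^{**}(x)=\sup_{(\xi,r)\in X^{\vartriangle}\times\mathbb R}\big(\xi_r(x)-^{\vartriangle}g^*(\xi,r)\big),\quad x\in X.$$
   Context: $\overline{\mathbb R}=\mathbb R\cup\{\pm\infty\}$ with usual order; inf-addition $r+^{\vartriangle}s=\inf\{a+b: a,b\in\mathbb R, r\leq a, s\leq b\}$; inf-difference $r-^{\vartriangle}s=\min\{t: r\leq s+^{\vartriangle}t\}$. $\mathbb R^{\vartriangle}$ is $\overline{\mathbb R}$ with $+^{\vartriangle}$; $g$ convex means $g(tx_1+(1-t)x_2)\leq tg(x_1)+^{\vartriangle}(1-t)g(x_2)$ for $t\in(0,1)$; closed means $\operatorname{epi}g=\{(x,r)\in X\times\mathbb R: g(x)\leq r\}$ is closed. For $x^*\in X^*$, $r\in\mathbb R$: $x^*_r(x)=x^*(x)-r$; $\hat x^*_r(x)=-\infty$ if $x^*(x)-r\leq0$, $+\infty$ otherwise; $\hat x^*=\hat x^*_0$; $X^{\vartriangle}=X^*\cup\{\hat x^*: x^*\in X^*\}$; $\xi_r=x^*_r$ if $\xi=x^*$, $\xi_r=\hat x^*_r$ if $\xi=\hat x^*$. Conjugate: $g^*(\xi,r)=\sup_{x\in X}(\xi_r(x)-^{\vartriangle}g(x))$ for $(\xi,r)\in X^{\vartriangle}\times\mathbb R$. *)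

theory Defs
  imports "HOL-Analysis.Analysis"
begin

definition inf_add :: "ereal \<Rightarrow> ereal \<Rightarrow> ereal" where
  "inf_add r s = Inf {ereal (a + b) | a b. r \<le> ereal a \<and> s \<le> ereal b}"

definition inf_diff :: "ereal \<Rightarrow> ereal \<Rightarrow> ereal" where
  "inf_diff r s = Inf {t. r \<le> inf_add s t}"

text \<open>Separated (Hausdorff, via the class t2_space) locally convex real topological vector space.\<close>
definition locally_convex_space :: "'a::{real_vector, t2_space} itself \<Rightarrow> bool" where
  "locally_convex_space _ \<longleftrightarrow>
     continuous_on UNIV (\<lambda>p::'a \<times> 'a. fst p + snd p) \<and>
     continuous_on UNIV (\<lambda>p::real \<times> 'a. fst p *\<^sub>R snd p) \<and>
     (\<forall>U::'a set. open U \<and> 0 \<in> U \<longrightarrow> (\<exists>V. open V \<and> convex V \<and> 0 \<in> V \<and> V \<subseteq> U))"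

definition topdual :: "('a::{real_vector, topological_space} \<Rightarrow> real) set" where
  "topdual = {f. linear f \<and> continuous_on UNIV f}"

text \<open>Elements of X^\<triangle>: x* or hat x*.\<close>
datatype 'a dualpt = Lin "'a \<Rightarrow> real" | Hat "'a \<Rightarrow> real"

definition Xtri :: "('a::{real_vector, topological_space}) dualpt set" where
  "Xtri = Lin ` topdual \<union> Hat ` topdual"

fun xi_r :: "'a dualpt \<Rightarrow> real \<Rightarrow> 'a \<Rightarrow> ereal" where
  "xi_r (Lin f) r x = ereal (f x - r)"
| "xi_r (Hat f) r x = (if f x - r \<le> 0 then -\<infinity> else \<infinity>)"

definition convex_tri :: "('a::real_vector \<Rightarrow> ereal) \<Rightarrow> bool" where
  "convex_tri g \<longleftrightarrow> (\<forall>x1 x2 t. 0 < t \<and> t < 1 \<longrightarrow>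
      g (t *\<^sub>R x1 + (1 - t) *\<^sub>R x2) \<le> inf_add (ereal t * g x1) (ereal (1 - t) * g x2))"

definition epi :: "('a \<Rightarrow> ereal) \<Rightarrow> ('a \<times> real) set" where
  "epi g = {(x, r). g x \<le> ereal r}"

definition closed_fun :: "('a::topological_space \<Rightarrow> ereal) \<Rightarrow> bool" where
  "closed_fun g \<longleftrightarrow> closed (epi g)"

definition conj_tri :: "('a::{real_vector, topological_space} \<Rightarrow> ereal) \<Rightarrow> 'a dualpt \<Rightarrow> real \<Rightarrow> ereal" where
  "conj_tri g \<xi> r = (SUP x. inf_diff (xi_r \<xi> r x) (g x))"

definition biconj_tri :: "('a::{real_vector, topological_space} \<Rightarrow> ereal) \<Rightarrow> 'a \<Rightarrow> ereal" where
  "biconj_tri g x = (SUP p \<in> Xtri \<times> (UNIV::real set). inf_diff (xi_r (fst p) (snd p) x) (conj_tri g (fst p) (snd p)))"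

end

theory Submission
  imports Defs
begin

lemma inf_add_eq: "inf_add r s = (if r = \<infinity> \<or> s = \<infinity> then \<infinity> else r + s)"
proof (cases "r = \<infinity> \<or> s = \<infinity>")
  case True
  then have e: "{ereal (a + b) | a b. r \<le> ereal a \<and> s \<le> ereal b} = {}" by auto
  show ?thesis unfolding inf_add_def e Inf_empty using True by (simp add: top_ereal_def)
next
  case False
  then have rs: "r < \<infinity>" "s < \<infinity>" by auto
  have "Inf {ereal (a + b) | a b. r \<le> ereal a \<and> s \<le> ereal b} = r + s"
  proof (rule antisym)
    show "r + s \<le> Inf {ereal (a + b) | a b. r \<le> ereal a \<and> s \<le> ereal b}"
      by (rule Inf_greatest) (auto, metis add_mono plus_ereal.simps(1))
    show "Inf {ereal (a + b) | a b. r \<le> ereal a \<and> s \<le> ereal b} \<le> r + s"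
    proof (cases r)
      case (real a)
      then show ?thesis
      proof (cases s)
        case (real b)
        then show ?thesis using \<open>r = ereal a\<close> by (intro Inf_lower) auto
      next
        case PInf then show ?thesis using rs by simp
      next
        case MInf
        have L: "Inf {ereal (a + b) | a b. r \<le> ereal a \<and> s \<le> ereal b} \<le> ereal (a + b)" for b
          using real MInf by (intro Inf_lower) auto
        have "Inf {ereal (a + b) | a b. r \<le> ereal a \<and> s \<le> ereal b} = -\<infinity>"
        proof (rule ereal_bot)
        fix B show "Inf {ereal (a + b) | a b. r \<le> ereal a \<and> s \<le> ereal b} \<le> ereal B" using L[of "B - a"] by simp
      qed
        then show ?thesis by simp
      qed
    next
      case PInf then show ?thesis using rs by simp
    next
      case MInf
      obtain b0 where b: "s \<le> ereal b0" using rs by (cases s) auto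
      have L: "Inf {ereal (a + b) | a b. r \<le> ereal a \<and> s \<le> ereal b} \<le> ereal (c + b0)" for c
        using b MInf by (intro Inf_lower) auto
      have "Inf {ereal (a + b) | a b. r \<le> ereal a \<and> s \<le> ereal b} = -\<infinity>"
      proof (rule ereal_bot)
        fix B show "Inf {ereal (a + b) | a b. r \<le> ereal a \<and> s \<le> ereal b} \<le> ereal B" using L[of "B - b0"] by simp
      qed
      then show ?thesis by simp
    qed
  qed
  then show ?thesis using False by (simp add: inf_add_def)
qed


lemma inf_diff_eq: "inf_diff r s = (if s = \<infinity> then -\<infinity> else if s = -\<infinity> then (if r = -\<infinity> then -\<infinity> else \<infinity>) else r - s)"
proof (cases s)
  case (real a)
  have "r \<le> inf_add s t \<longleftrightarrow> r - s \<le> t" for t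
    using real by (cases r; cases t) (auto simp: inf_add_eq)
  then have "{t. r \<le> inf_add s t} = {r - s ..}" by auto
  then show ?thesis using real by (simp add: inf_diff_def)
next
  case PInf
  then have "{t. r \<le> inf_add s t} = UNIV" by (auto simp: inf_add_eq)
  then show ?thesis using PInf by (simp add: inf_diff_def bot_ereal_def)
next
  case MInf
  show ?thesis
  proof (cases "r = -\<infinity>")
    case True
    then have "{t. r \<le> inf_add s t} = UNIV" by (auto simp: inf_add_eq)
    then show ?thesis using True MInf by (simp add: inf_diff_def bot_ereal_def)
  next
    case False
    then have "{t. r \<le> inf_add s t} = {\<infinity>}" using MInf by (auto simp: inf_add_eq; case_tac x; auto)
    then show ?thesis using False MInf by (simp add: inf_diff_def)
  qed
qed

lemma inf_diff_le_iff: "inf_diff r s \<le> t \<longleftrightarrow> r \<le> inf_add s t"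
  by (cases r; cases s; cases t) (auto simp: inf_diff_eq inf_add_eq)

lemma inf_add_commute: "inf_add r s = inf_add s r"
  by (auto simp: inf_add_eq add.commute)

lemma inf_add_mono: "r \<le> r' \<Longrightarrow> s \<le> s' \<Longrightarrow> inf_add r s \<le> inf_add r' s'"
  by (cases r; cases s; cases r'; cases s') (auto simp: inf_add_eq)

lemma inf_diff_antimono: "s \<le> s' \<Longrightarrow> inf_diff r s' \<le> inf_diff r s"
  by (cases r; cases s; cases s') (auto simp: inf_diff_eq)


definition functional_graph :: "('b \<times> real) set \<Rightarrow> bool" where
  "functional_graph G \<longleftrightarrow> (\<forall>x a b. (x, a) \<in> G \<longrightarrow> (x, b) \<in> G \<longrightarrow> a = b)"

lemma hb_extend:
  fixes p :: "'b::real_vector \<Rightarrow> real" and G :: "('b \<times> real) set"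
  assumes subadd: "\<And>x y. p (x + y) \<le> p x + p y"
    and hom: "\<And>c x. c > 0 \<Longrightarrow> p (c *\<^sub>R x) \<le> c * p x"
    and sub: "subspace G" and fg: "functional_graph G" and dom: "\<And>x a. (x, a) \<in> G \<Longrightarrow> a \<le> p x"
    and x1: "x1 \<notin> fst ` G"
  shows "\<exists>G'. G \<subseteq> G' \<and> G' \<noteq> G \<and> subspace G' \<and> functional_graph G' \<and> (\<forall>x a. (x, a) \<in> G' \<longrightarrow> a \<le> p x)"
proof -
  define S where "S = {b - p (y - x1) | y b. (y, b) \<in> G}"
  have G0: "(0, 0) \<in> G" using subspace_0[OF sub] by (simp add: zero_prod_def)
  have bound: "b - p (y - x1) \<le> p (z + x1) - e" if "(y, b) \<in> G" "(z, e) \<in> G" for y b z e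
  proof -
    have "(y, b) + (z, e) \<in> G" using subspace_add[OF sub that] .
    then have "b + e \<le> p (y + z)" using dom by simp
    also have "\<dots> = p ((y - x1) + (z + x1))" by (simp add: algebra_simps)
    also have "\<dots> \<le> p (y - x1) + p (z + x1)" by (rule subadd)
    finally show ?thesis by simp
  qed
  define a where "a = Sup S"
  have Sne: "S \<noteq> {}" using G0 by (auto simp: S_def)
  have Sbdd: "bdd_above S" unfolding bdd_above_def S_def using bound[OF _ G0] by auto
  have a_ge: "b - p (y - x1) \<le> a" if "(y, b) \<in> G" for y b
    unfolding a_def using that by (intro cSup_upper Sbdd) (auto simp: S_def)
  have a_le: "a \<le> p (z + x1) - e" if "(z, e) \<in> G" for z e
    unfolding a_def using Sne by (rule cSup_least) (auto simp: S_def intro: bound[OF _ that])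
  have scaleG: "(c *\<^sub>R y, c * b) \<in> G" if "(y, b) \<in> G" for c y b
    using subspace_scale[OF sub that, of c] by simp
  define G' where "G' = {(y + t *\<^sub>R x1, b + t * a) | y b t. (y, b) \<in> G}"
  have "G \<subseteq> G'"
  proof
    fix q assume "q \<in> G"
    moreover obtain y b where "q = (y, b)" by fastforce
    ultimately have "q = (y + 0 *\<^sub>R x1, b + 0 * a) \<and> (y, b) \<in> G" by simp
    then show "q \<in> G'" unfolding G'_def by blast
  qed
  moreover have "(x1, a) = (0 + 1 *\<^sub>R x1, 0 + 1 * a) \<and> ((0::'b), (0::real)) \<in> G" using G0 by simp
  then have "(x1, a) \<in> G'" unfolding G'_def by blast
  then have "G' \<noteq> G" using x1 by force
  moreover have "subspace G'"
  proof (rule subspaceI)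
    have "(0::'b \<times> real) = (0 + 0 *\<^sub>R x1, 0 + 0 * a) \<and> ((0::'b), (0::real)) \<in> G" using G0 by (simp add: zero_prod_def)
    then show "0 \<in> G'" unfolding G'_def by blast
  next
    fix u v assume "u \<in> G'" "v \<in> G'"
    then obtain y b t y' b' t' where u: "u = (y + t *\<^sub>R x1, b + t * a)" "(y, b) \<in> G"
      and v: "v = (y' + t' *\<^sub>R x1, b' + t' * a)" "(y', b') \<in> G"
      unfolding G'_def by blast
    have "(y + y', b + b') \<in> G" using subspace_add[OF sub u(2) v(2)] by simp
    moreover have "u + v = ((y + y') + (t + t') *\<^sub>R x1, (b + b') + (t + t') * a)"
      unfolding u v by (simp add: algebra_simps)
    ultimately show "u + v \<in> G'" unfolding G'_def by blast
  next
    fix c u assume "u \<in> G'"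
    then obtain y b t where u: "u = (y + t *\<^sub>R x1, b + t * a)" "(y, b) \<in> G"
      unfolding G'_def by blast
    have "c *\<^sub>R u = (c *\<^sub>R y + (c * t) *\<^sub>R x1, c * b + (c * t) * a)"
      unfolding u by (simp add: algebra_simps)
    then show "c *\<^sub>R u \<in> G'" unfolding G'_def using scaleG[OF u(2), of c] by blast
  qed
  moreover have "functional_graph G'"
    unfolding functional_graph_def
  proof (intro allI impI)
    fix x e e'
    assume "(x, e) \<in> G'" "(x, e') \<in> G'"
    then obtain y b t y' b' t' where u: "x = y + t *\<^sub>R x1" "e = b + t * a" "(y, b) \<in> G"
      and v: "x = y' + t' *\<^sub>R x1" "e' = b' + t' * a" "(y', b') \<in> G"
      unfolding G'_def by blast
    have t: "t = t'"
    proof (rule ccontr)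
      assume "t \<noteq> t'"
      have "(y' - y, b' - b) \<in> G" using subspace_diff[OF sub v(3) u(3)] by simp
      then have "(inverse (t - t') *\<^sub>R (y' - y), inverse (t - t') * (b' - b)) \<in> G" by (rule scaleG)
      moreover have "inverse (t - t') *\<^sub>R (y' - y) = x1"
      proof -
        have "y' - y = (t - t') *\<^sub>R x1" using u(1) v(1) by (simp add: algebra_simps)
        then show ?thesis using \<open>t \<noteq> t'\<close> by simp
      qed
      ultimately show False using x1 by force
    qed
    then have "y = y'" using u(1) v(1) by simp
    then have "b = b'" using fg u(3) v(3) unfolding functional_graph_def by blast
    then show "e = e'" using u(2) v(2) t by simp
  qed
  moreover have "\<forall>x e. (x, e) \<in> G' \<longrightarrow> e \<le> p x"
  proof (intro allI impI)
    fix x e assume "(x, e) \<in> G'"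
    then obtain y b t where u: "x = y + t *\<^sub>R x1" "e = b + t * a" "(y, b) \<in> G"
      unfolding G'_def by blast
    consider "t = 0" | "t > 0" | "t < 0" by linarith
    then show "e \<le> p x"
    proof cases
      case 1 then show ?thesis using u dom by simp
    next
      case 2
      have "a \<le> p (inverse t *\<^sub>R y + x1) - inverse t * b" by (rule a_le[OF scaleG[OF u(3)]])
      then have "t * a \<le> t * p (inverse t *\<^sub>R y + x1) - b" using 2
        by (simp add: field_simps)
      moreover have "p (inverse t *\<^sub>R y + x1) \<le> inverse t * p (y + t *\<^sub>R x1)"
        using hom[of "inverse t" "y + t *\<^sub>R x1"] 2 by (simp add: algebra_simps)
      then have "t * p (inverse t *\<^sub>R y + x1) \<le> p (y + t *\<^sub>R x1)"
        using 2 by (simp add: field_simps)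
      ultimately show ?thesis using u by simp
    next
      case 3
      define s where "s = - t"
      have s: "s > 0" using 3 by (simp add: s_def)
      have "inverse s * b - p (inverse s *\<^sub>R y - x1) \<le> a" by (rule a_ge[OF scaleG[OF u(3)]])
      then have "b - s * p (inverse s *\<^sub>R y - x1) \<le> s * a" using s
        by (simp add: field_simps)
      moreover have "p (inverse s *\<^sub>R y - x1) \<le> inverse s * p (y - s *\<^sub>R x1)"
        using hom[of "inverse s" "y - s *\<^sub>R x1"] s by (simp add: algebra_simps)
      then have "s * p (inverse s *\<^sub>R y - x1) \<le> p (y - s *\<^sub>R x1)"
        using s by (simp add: field_simps)
      ultimately show ?thesis using u by (simp add: s_def)
    qed
  qed
  ultimately show ?thesis by blast
qed


lemma hahn_banach:
  fixes p :: "'b::real_vector \<Rightarrow> real" and G0 :: "('b \<times> real) set"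
  assumes subadd: "\<And>x y. p (x + y) \<le> p x + p y"
    and hom: "\<And>c x. c > 0 \<Longrightarrow> p (c *\<^sub>R x) \<le> c * p x"
    and sub0: "subspace G0" and fg0: "functional_graph G0" and dom0: "\<And>x a. (x, a) \<in> G0 \<Longrightarrow> a \<le> p x"
  shows "\<exists>f. linear f \<and> (\<forall>x. f x \<le> p x) \<and> (\<forall>x a. (x, a) \<in> G0 \<longrightarrow> f x = a)"
proof -
  define A where "A = {G. G0 \<subseteq> G \<and> subspace G \<and> functional_graph G \<and> (\<forall>x a. (x, a) \<in> G \<longrightarrow> a \<le> p x)}"
  have G0A: "G0 \<in> A" using assms by (auto simp: A_def)
  have "\<forall>C\<in>chains A. \<exists>U\<in>A. \<forall>X\<in>C. X \<subseteq> U"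
  proof
    fix C assume C: "C \<in> chains A"
    show "\<exists>U\<in>A. \<forall>X\<in>C. X \<subseteq> U"
    proof (cases "C = {}")
      case True then show ?thesis using G0A by blast
    next
      case False
      have CA: "C \<subseteq> A" and ch: "\<And>X Y. X \<in> C \<Longrightarrow> Y \<in> C \<Longrightarrow> X \<subseteq> Y \<or> Y \<subseteq> X"
        using C by (auto simp: chains_def chain_subset_def)
      have two: "\<exists>Z\<in>C. u \<in> Z \<and> v \<in> Z" if "u \<in> \<Union>C" "v \<in> \<Union>C" for u v
        using that ch by blast
      have "\<Union>C \<in> A"
        unfolding A_def
      proof (intro CollectI conjI allI impI)
        obtain X where "X \<in> C" using False by blast
        then have "G0 \<subseteq> X" using CA by (auto simp: A_def)
        then show "G0 \<subseteq> \<Union>C" using \<open>X \<in> C\<close> by blast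
        show "subspace (\<Union>C)"
        proof (rule subspaceI)
          show "0 \<in> \<Union>C" using \<open>X \<in> C\<close> CA subspace_0 by (force simp: A_def)
        next
          fix u v assume "u \<in> \<Union>C" "v \<in> \<Union>C"
          then obtain Z where "Z \<in> C" "u \<in> Z" "v \<in> Z" using two by blast
          then show "u + v \<in> \<Union>C" using CA subspace_add by (force simp: A_def)
        next
          fix c u assume "u \<in> \<Union>C"
          then obtain Z where "Z \<in> C" "u \<in> Z" by blast
          then show "c *\<^sub>R u \<in> \<Union>C" using CA subspace_scale by (force simp: A_def)
        qed
        show "functional_graph (\<Union>C)"
          unfolding functional_graph_def
        proof (intro allI impI)
          fix x a b assume "(x, a) \<in> \<Union>C" "(x, b) \<in> \<Union>C"
          then obtain Z where "Z \<in> C" "(x, a) \<in> Z" "(x, b) \<in> Z" using two by blast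
          then show "a = b" using CA by (auto simp: A_def functional_graph_def)
        qed
      next
        fix x a assume "(x, a) \<in> \<Union>C"
        then show "a \<le> p x" using CA by (auto simp: A_def)
      qed
      then show ?thesis by blast
    qed
  qed
  from Zorn_Lemma2[OF this] obtain M where MA: "M \<in> A" and max: "\<And>X. X \<in> A \<Longrightarrow> M \<subseteq> X \<Longrightarrow> X = M"
    by blast
  have Msub: "subspace M" and Mfg: "functional_graph M" and Mdom: "\<And>x a. (x, a) \<in> M \<Longrightarrow> a \<le> p x"
    and M0: "G0 \<subseteq> M" using MA by (auto simp: A_def)
  have total: "\<exists>a. (x, a) \<in> M" for x
  proof (rule ccontr)
    assume "\<nexists>a. (x, a) \<in> M"
    then have "x \<notin> fst ` M" by force
    from hb_extend[OF subadd hom Msub Mfg Mdom this] obtain G' where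
      "M \<subseteq> G'" "G' \<noteq> M" "subspace G'" "functional_graph G'" "\<forall>x a. (x, a) \<in> G' \<longrightarrow> a \<le> p x"
      by blast
    then have "G' \<in> A" using M0 by (auto simp: A_def)
    then show False using max \<open>M \<subseteq> G'\<close> \<open>G' \<noteq> M\<close> by blast
  qed
  define f where "f x = (THE a. (x, a) \<in> M)" for x
  have fM: "(x, f x) \<in> M" for x
    unfolding f_def using total[of x] Mfg by (metis functional_graph_def theI)
  have uniq: "(x, a) \<in> M \<Longrightarrow> f x = a" for x a
    using fM[of x] Mfg by (auto simp: functional_graph_def)
  have "linear f"
    unfolding linear_iff
  proof (intro conjI allI)
    fix x y
    show "f (x + y) = f x + f y"
      using subspace_add[OF Msub fM[of x] fM[of y]] by (intro uniq) simp
  next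
    fix c x
    show "f (c *\<^sub>R x) = c *\<^sub>R f x"
      using subspace_scale[OF Msub fM[of x], of c] by (intro uniq) simp
  qed
  moreover have "\<forall>x. f x \<le> p x" using fM Mdom by blast
  moreover have "\<forall>x a. (x, a) \<in> G0 \<longrightarrow> f x = a" using M0 uniq by blast
  ultimately show ?thesis by blast
qed


lemma open_vimage_UNIV: "continuous_on UNIV f \<Longrightarrow> open B \<Longrightarrow> open (f -` B)"
  using continuous_on_open_vimage[of UNIV f] by auto

context
  fixes dummy :: "'b::{real_vector, t2_space} itself"
  assumes lcs: "locally_convex_space TYPE('b)"
begin

lemma lcs_add: "continuous_on UNIV (\<lambda>p::'b \<times> 'b. fst p + snd p)"
  and lcs_mul: "continuous_on UNIV (\<lambda>p::real \<times> 'b. fst p *\<^sub>R snd p)"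
  and lcs_base: "\<And>U::'b set. open U \<Longrightarrow> 0 \<in> U \<Longrightarrow> \<exists>V. open V \<and> convex V \<and> 0 \<in> V \<and> V \<subseteq> U"
  using lcs unfolding locally_convex_space_def by blast+

lemma cont_transl: "continuous_on UNIV (\<lambda>x::'b. a + x)"
proof -
  have "continuous_on UNIV (\<lambda>x::'b. (\<lambda>p::'b \<times> 'b. fst p + snd p) (a, x))"
    by (rule continuous_on_compose2[OF lcs_add]) (auto intro!: continuous_intros)
  then show ?thesis by simp
qed

lemma cont_scale: "continuous_on UNIV (\<lambda>x::'b. c *\<^sub>R x)"
proof -
  have "continuous_on UNIV (\<lambda>x::'b. (\<lambda>p::real \<times> 'b. fst p *\<^sub>R snd p) (c, x))"
    by (rule continuous_on_compose2[OF lcs_mul]) (auto intro!: continuous_intros)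
  then show ?thesis by simp
qed

lemma cont_scale_left: "continuous_on UNIV (\<lambda>t::real. t *\<^sub>R (x::'b))"
proof -
  have "continuous_on UNIV (\<lambda>t::real. (\<lambda>p::real \<times> 'b. fst p *\<^sub>R snd p) (t, x))"
    by (rule continuous_on_compose2[OF lcs_mul]) (auto intro!: continuous_intros)
  then show ?thesis by simp
qed

lemma open_transl: "open (S::'b set) \<Longrightarrow> open ((\<lambda>x. a + x) ` S)"
proof -
  assume "open S"
  have "(\<lambda>x. a + x) ` S = (\<lambda>x. -a + x) -` S"
  proof
    show "(\<lambda>x. a + x) ` S \<subseteq> (\<lambda>x. -a + x) -` S" by auto
    show "(\<lambda>x. -a + x) -` S \<subseteq> (\<lambda>x. a + x) ` S"
    proof
      fix y assume "y \<in> (\<lambda>x. -a + x) -` S"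
      then show "y \<in> (\<lambda>x. a + x) ` S" by (intro image_eqI[of y "\<lambda>x. a + x" "-a + y"]) simp_all
    qed
  qed
  moreover have "open ((\<lambda>x. -a + x) -` S)" by (rule open_vimage_UNIV[OF cont_transl \<open>open S\<close>])
  ultimately show ?thesis by simp
qed

lemma open_scale: "open (S::'b set) \<Longrightarrow> c \<noteq> 0 \<Longrightarrow> open ((\<lambda>x. c *\<^sub>R x) ` S)"
proof -
  assume "open S" "c \<noteq> 0"
  have "(\<lambda>x. c *\<^sub>R x) ` S = (\<lambda>x. inverse c *\<^sub>R x) -` S"
  proof
    show "(\<lambda>x. c *\<^sub>R x) ` S \<subseteq> (\<lambda>x. inverse c *\<^sub>R x) -` S" using \<open>c \<noteq> 0\<close> by auto
    show "(\<lambda>x. inverse c *\<^sub>R x) -` S \<subseteq> (\<lambda>x. c *\<^sub>R x) ` S"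
    proof
      fix y assume "y \<in> (\<lambda>x. inverse c *\<^sub>R x) -` S"
      then show "y \<in> (\<lambda>x. c *\<^sub>R x) ` S" using \<open>c \<noteq> 0\<close>
        by (intro image_eqI[of y "\<lambda>x. c *\<^sub>R x" "inverse c *\<^sub>R y"]) simp_all
    qed
  qed
  moreover have "open ((\<lambda>x. inverse c *\<^sub>R x) -` S)" by (rule open_vimage_UNIV[OF cont_scale \<open>open S\<close>])
  ultimately show ?thesis by simp
qed

lemma open_neg: "open (S::'b set) \<Longrightarrow> open {x. - x \<in> S}"
proof -
  assume "open S"
  have "open ((\<lambda>x. (-1) *\<^sub>R x) -` S)" by (rule open_vimage_UNIV[OF cont_scale \<open>open S\<close>])
  moreover have "{x. - x \<in> S} = (\<lambda>x. (-1) *\<^sub>R x) -` S" by auto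
  ultimately show ?thesis by simp
qed

lemma absorb_at:
  assumes "open (U::'b set)" "t0 *\<^sub>R x \<in> U"
  shows "\<exists>\<delta>>0. \<forall>t. \<bar>t - t0\<bar> < \<delta> \<longrightarrow> t *\<^sub>R x \<in> U"
proof -
  have o: "open ((\<lambda>t. t *\<^sub>R x) -` U)" by (rule open_vimage_UNIV[OF cont_scale_left assms(1)])
  have "t0 \<in> (\<lambda>t. t *\<^sub>R x) -` U" using assms(2) by simp
  then obtain e where e: "e > 0" "\<And>y. dist y t0 < e \<Longrightarrow> y \<in> (\<lambda>t. t *\<^sub>R x) -` U"
    using o unfolding open_dist by blast
  show ?thesis
  proof (intro exI[of _ e] conjI allI impI)
    fix t assume "\<bar>t - t0\<bar> < e"
    then show "t *\<^sub>R x \<in> U" using e(2)[of t] by (simp add: dist_real_def)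
  qed (rule e(1))
qed

lemma absorb:
  assumes "open (U::'b set)" "0 \<in> U"
  shows "\<exists>\<delta>>0. \<forall>t. \<bar>t\<bar> < \<delta> \<longrightarrow> t *\<^sub>R x \<in> U"
  using absorb_at[of U 0 x] assms by simp

end

definition mink :: "'b::real_vector set \<Rightarrow> 'b \<Rightarrow> real" where
  "mink D x = Inf {t. 0 < t \<and> inverse t *\<^sub>R x \<in> D}"

context
  fixes D :: "'b::{real_vector, t2_space} set"
  assumes lcs: "locally_convex_space TYPE('b)"
    and D: "open D" "convex D" "0 \<in> D"
begin

lemma mink_ne: "{t. 0 < t \<and> inverse t *\<^sub>R x \<in> D} \<noteq> {}"
proof -
  obtain \<delta> where d: "\<delta> > 0" "\<And>t. \<bar>t\<bar> < \<delta> \<Longrightarrow> t *\<^sub>R x \<in> D"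
    using absorb[OF lcs D(1) D(3)] by blast
  have "\<bar>inverse (2 / \<delta>)\<bar> < \<delta>" using d(1) by simp
  then have "inverse (2 / \<delta>) *\<^sub>R x \<in> D" by (rule d(2))
  moreover have "0 < 2 / \<delta>" using d(1) by simp
  ultimately show ?thesis by blast
qed

lemma mink_bdd: "bdd_below {t. 0 < t \<and> inverse t *\<^sub>R x \<in> D}"
  by (rule bdd_belowI[of _ 0]) simp

lemma mink_nonneg: "0 \<le> mink D x"
  unfolding mink_def by (rule cInf_greatest[OF mink_ne]) simp

lemma mink_le: "0 < t \<Longrightarrow> inverse t *\<^sub>R x \<in> D \<Longrightarrow> mink D x \<le> t"
  unfolding mink_def by (rule cInf_lower[OF _ mink_bdd]) simp

lemma mink_add: "mink D (x + y) \<le> mink D x + mink D y"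
proof -
  have key: "mink D (x + y) \<le> t + s" if t: "0 < t" "inverse t *\<^sub>R x \<in> D" and s: "0 < s" "inverse s *\<^sub>R y \<in> D" for t s
  proof (rule mink_le)
    show "0 < t + s" using t s by simp
    have "(t / (t + s)) *\<^sub>R (inverse t *\<^sub>R x) + (s / (t + s)) *\<^sub>R (inverse s *\<^sub>R y) \<in> D"
    proof (rule convexD[OF D(2)])
      have ts: "t + s > 0" using t s by simp
      show "t / (t + s) + s / (t + s) = 1" using ts by (simp add: add_divide_distrib[symmetric])
      show "0 \<le> t / (t + s)" "0 \<le> s / (t + s)" using t s by auto
    qed (use t s in auto)
    moreover have "(t / (t + s)) *\<^sub>R (inverse t *\<^sub>R x) + (s / (t + s)) *\<^sub>R (inverse s *\<^sub>R y) = inverse (t + s) *\<^sub>R (x + y)"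
    proof -
      have "t / (t + s) * inverse t = inverse (t + s)" "s / (t + s) * inverse s = inverse (t + s)"
        using t s by (simp_all add: field_simps)
      then show ?thesis by (simp add: scaleR_add_right)
    qed
    ultimately show "inverse (t + s) *\<^sub>R (x + y) \<in> D" by simp
  qed
  have "mink D (x + y) - mink D y \<le> mink D x"
    unfolding mink_def[of D x]
  proof (rule cInf_greatest[OF mink_ne])
    fix t assume t: "t \<in> {t. 0 < t \<and> inverse t *\<^sub>R x \<in> D}"
    have "mink D (x + y) - t \<le> mink D y"
      unfolding mink_def[of D y]
    proof (rule cInf_greatest[OF mink_ne])
      fix s assume "s \<in> {t. 0 < t \<and> inverse t *\<^sub>R y \<in> D}"
      then show "mink D (x + y) - t \<le> s" using key[of t s] t by simp
    qed
    then show "mink D (x + y) - mink D y \<le> t" by simp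
  qed
  then show ?thesis by simp
qed

lemma mink_hom: "c > 0 \<Longrightarrow> mink D (c *\<^sub>R x) \<le> c * mink D x"
proof -
  assume c: "c > 0"
  have "mink D (c *\<^sub>R x) / c \<le> mink D x"
    unfolding mink_def[of D x]
  proof (rule cInf_greatest[OF mink_ne])
    fix t assume t: "t \<in> {t. 0 < t \<and> inverse t *\<^sub>R x \<in> D}"
    have "mink D (c *\<^sub>R x) \<le> c * t"
    proof (rule mink_le)
      show "0 < c * t" using c t by simp
      have "inverse (c * t) * c = inverse t" using c t by (simp add: field_simps)
      then show "inverse (c * t) *\<^sub>R c *\<^sub>R x \<in> D" using t by (simp del: inverse_mult_distrib)
    qed
    then show "mink D (c *\<^sub>R x) / c \<le> t" using c by (simp add: field_simps)
  qed
  then show ?thesis using c by (simp add: field_simps)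
qed

lemma mink_lt1: "x \<in> D \<Longrightarrow> mink D x < 1"
proof -
  assume x: "x \<in> D"
  obtain \<delta> where d: "\<delta> > 0" "\<And>t. \<bar>t - 1\<bar> < \<delta> \<Longrightarrow> t *\<^sub>R x \<in> D"
    using absorb_at[OF lcs D(1), of 1 x] x by auto
  define e where "e = min (\<delta> / 2) 1"
  have e: "e > 0" "e < \<delta>" using d(1) by (auto simp: e_def)
  have "(1 + e) *\<^sub>R x \<in> D" using e by (intro d(2)) simp
  then have "mink D x \<le> inverse (1 + e)"
    using e by (intro mink_le) auto
  also have "\<dots> < 1" using e by (simp add: field_simps)
  finally show ?thesis .
qed

lemma mink_ge1: "x \<notin> D \<Longrightarrow> 1 \<le> mink D x"
proof (rule ccontr)
  assume x: "x \<notin> D" and "\<not> 1 \<le> mink D x"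
  then have "Inf {t. 0 < t \<and> inverse t *\<^sub>R x \<in> D} < 1" by (simp add: mink_def)
  then obtain t where t: "0 < t" "inverse t *\<^sub>R x \<in> D" "t < 1"
    using cInf_less_iff[OF mink_ne mink_bdd] by auto
  have "t *\<^sub>R (inverse t *\<^sub>R x) + (1 - t) *\<^sub>R 0 \<in> D"
    by (rule convexD[OF D(2) t(2) D(3)]) (use t in auto)
  then show False using t x by simp
qed

end


lemma separation:
  fixes C :: "'b::{real_vector, t2_space} set"
  assumes lcs: "locally_convex_space TYPE('b)" and C: "closed C" "convex C" and p: "p \<notin> C"
  shows "\<exists>f \<gamma>. f \<in> topdual \<and> (\<forall>c\<in>C. f c \<le> \<gamma>) \<and> \<gamma> < f p"
proof (cases "C = {}")
  case True
  then show ?thesis by (intro exI[of _ "\<lambda>x. 0"] exI[of _ "-1"]) (simp add: topdual_def linear_zero)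
next
  case False
  then obtain c0 where c0: "c0 \<in> C" by blast
  define W where "W = (\<lambda>x. p + x) -` (- C)"
  have "open W" unfolding W_def using C(1) by (intro open_vimage_UNIV[OF cont_transl[OF lcs]]) auto
  moreover have "0 \<in> W" using p by (simp add: W_def)
  ultimately obtain V where V: "open V" "convex V" "0 \<in> V" "V \<subseteq> W"
    using lcs_base[OF lcs] by blast
  define U where "U = V \<inter> {x. - x \<in> V}"
  have U: "open U" "convex U" "0 \<in> U"
  proof -
    show "open U" unfolding U_def using V by (intro open_Int open_neg[OF lcs])
    have "{x. - x \<in> V} = uminus -` V" by auto
    then have "convex {x. - x \<in> V}" using convex_linear_vimage[OF linear_uminus V(2)] by simp
    then show "convex U" unfolding U_def using V(2) by (rule convex_Int[rotated])
    show "0 \<in> U" using V by (simp add: U_def)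
  qed
  have Usym: "u \<in> U \<Longrightarrow> p - u \<notin> C" for u
    using V(4) by (auto simp: U_def W_def)
  define D where "D = {c + u - c0 | c u. c \<in> C \<and> u \<in> U}"
  have D_open: "open D"
  proof -
    have "D = (\<Union>c\<in>C. (\<lambda>u. (c - c0) + u) ` U)" unfolding D_def by (auto simp: algebra_simps) blast
    then show ?thesis using open_transl[OF lcs U(1)] by auto
  qed
  have D_convex: "convex D"
  proof (rule convexI)
    fix x y and a b :: real
    assume xD: "x \<in> D" and yD: "y \<in> D" and ab0: "0 \<le> a" "0 \<le> b" "a + b = 1"
    then have ab: "0 \<le> a \<and> 0 \<le> b \<and> a + b = 1" by simp
    from xD yD obtain c1 u1 c2 u2 where x: "x = c1 + u1 - c0" "c1 \<in> C" "u1 \<in> U"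
      and y: "y = c2 + u2 - c0" "c2 \<in> C" "u2 \<in> U" unfolding D_def by blast
    have "a *\<^sub>R c1 + b *\<^sub>R c2 \<in> C" using ab x y by (intro convexD[OF C(2)]) auto
    moreover have "a *\<^sub>R u1 + b *\<^sub>R u2 \<in> U" using ab x y by (intro convexD[OF U(2)]) auto
    moreover have "a *\<^sub>R x + b *\<^sub>R y = (a *\<^sub>R c1 + b *\<^sub>R c2) + (a *\<^sub>R u1 + b *\<^sub>R u2) - c0"
    proof -
      have "a *\<^sub>R x + b *\<^sub>R y = (a *\<^sub>R c1 + b *\<^sub>R c2) + (a *\<^sub>R u1 + b *\<^sub>R u2) - (a + b) *\<^sub>R c0"
        unfolding x y by (simp add: algebra_simps)
      then show ?thesis using ab by simp
    qed
    ultimately show "a *\<^sub>R x + b *\<^sub>R y \<in> D" unfolding D_def by blast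
  qed
  have D0: "0 \<in> D" unfolding D_def using c0 U(3) by force
  define z0 where "z0 = p - c0"
  have z0D: "z0 \<notin> D"
  proof
    assume "z0 \<in> D"
    then obtain c u where "z0 = c + u - c0" "c \<in> C" "u \<in> U" unfolding D_def by blast
    then have "p - u = c" by (simp add: z0_def algebra_simps)
    then show False using Usym[OF \<open>u \<in> U\<close>] \<open>c \<in> C\<close> by simp
  qed
  have z0ne: "z0 \<noteq> 0" using z0D D0 by auto
  define \<mu> where "\<mu> = mink D"
  note mk = mink_nonneg[OF lcs D_open D_convex D0] mink_add[OF lcs D_open D_convex D0]
    mink_hom[OF lcs D_open D_convex D0] mink_lt1[OF lcs D_open D_convex D0]
    mink_ge1[OF lcs D_open D_convex D0]
  define G0 where "G0 = {(t *\<^sub>R z0, t) | t. True}"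
  have "subspace G0"
  proof (rule subspaceI)
    show "0 \<in> G0" unfolding G0_def by (auto simp: zero_prod_def intro!: exI[of _ 0])
  next
    fix u v assume "u \<in> G0" "v \<in> G0"
    then obtain s t where "u = (s *\<^sub>R z0, s)" "v = (t *\<^sub>R z0, t)" unfolding G0_def by blast
    then have "u + v = ((s + t) *\<^sub>R z0, s + t)" by (simp add: scaleR_add_left)
    then show "u + v \<in> G0" unfolding G0_def by blast
  next
    fix c u assume "u \<in> G0"
    then obtain s where "u = (s *\<^sub>R z0, s)" unfolding G0_def by blast
    then have "c *\<^sub>R u = ((c * s) *\<^sub>R z0, c * s)" by simp
    then show "c *\<^sub>R u \<in> G0" unfolding G0_def by blast
  qed
  moreover have "functional_graph G0"
    unfolding functional_graph_def G0_def using z0ne by auto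
  moreover have "a \<le> \<mu> x" if "(x, a) \<in> G0" for x a
  proof -
    from that have x: "x = a *\<^sub>R z0" unfolding G0_def by blast
    show ?thesis
    proof (cases "a > 0")
      case True
      have "\<mu> z0 \<le> inverse a * \<mu> x"
        using mk(3)[of "inverse a" x] True by (simp add: x \<mu>_def)
      moreover have "1 \<le> \<mu> z0" using mk(5)[OF z0D] by (simp add: \<mu>_def)
      ultimately have "1 \<le> inverse a * \<mu> x" by simp
      then show ?thesis using True by (simp add: field_simps)
    next
      case False
      then show ?thesis using mk(1)[of x] by (simp add: \<mu>_def)
    qed
  qed
  ultimately obtain f where f: "linear f" "\<And>x. f x \<le> \<mu> x" "\<And>x a. (x, a) \<in> G0 \<Longrightarrow> f x = a"
    using hahn_banach[of \<mu> G0] mk(2,3) unfolding \<mu>_def by blast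
  have fz0: "f z0 = 1" using f(3)[of z0 1] by (auto simp: G0_def intro!: exI[of _ 1])
  have flt: "f x < 1" if "x \<in> D" for x using f(2)[of x] mk(4)[OF that] by (simp add: \<mu>_def)
  have fadd: "f (x + y) = f x + f y" and fscale: "f (c *\<^sub>R x) = c * f x" for x y c
    using f(1) unfolding linear_iff by auto
  define N where "N = D \<inter> {x. - x \<in> D}"
  have N: "open N" "0 \<in> N" unfolding N_def using D_open D0 by (auto intro!: open_Int open_neg[OF lcs])
  have Nabs: "\<bar>f n\<bar> < 1" if "n \<in> N" for n
  proof -
    have "f n < 1" "f (- n) < 1" using that flt by (auto simp: N_def)
    moreover have "f (- n) = - f n" using fscale[of "-1" n] by simp
    ultimately show ?thesis by simp
  qed
  have cont: "continuous_on UNIV f"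
    unfolding continuous_on_open_vimage[OF open_UNIV]
  proof (intro allI impI)
    fix B :: "real set" assume B: "open B"
    show "open (f -` B \<inter> UNIV)"
      unfolding open_subopen[of "f -` B \<inter> UNIV"]
    proof
      fix x assume "x \<in> f -` B \<inter> UNIV"
      then have "f x \<in> B" by simp
      then obtain e where e: "e > 0" "\<And>y. dist y (f x) < e \<Longrightarrow> y \<in> B" using B unfolding open_dist by blast
      define T where "T = (\<lambda>y. x + y) ` ((\<lambda>y. e *\<^sub>R y) ` N)"
      have "open T" unfolding T_def using e(1) N(1)
        by (intro open_transl[OF lcs] open_scale[OF lcs]) auto
      moreover have "x \<in> T" unfolding T_def using N(2) by (auto intro!: image_eqI[of x _ 0])
      moreover have "T \<subseteq> f -` B \<inter> UNIV"
      proof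
        fix w assume "w \<in> T"
        then obtain n where n: "n \<in> N" "w = x + e *\<^sub>R n" unfolding T_def by blast
        have "f w = f x + e * f n" using n(2) fadd fscale by simp
        moreover have "\<bar>e * f n\<bar> < e" using Nabs[OF n(1)] e(1) by (simp add: abs_mult)
        ultimately have "dist (f w) (f x) < e" by (simp add: dist_real_def)
        then show "w \<in> f -` B \<inter> UNIV" using e(2) by simp
      qed
      ultimately show "\<exists>T. open T \<and> x \<in> T \<and> T \<subseteq> f -` B \<inter> UNIV" by blast
    qed
  qed
  obtain \<delta> where d: "\<delta> > 0" "\<And>t. \<bar>t\<bar> < \<delta> \<Longrightarrow> t *\<^sub>R z0 \<in> U"
    using absorb[OF lcs U(1) U(3)] by blast
  define \<eta> where "\<eta> = \<delta> / 2"
  have \<eta>: "\<eta> > 0" "\<eta> *\<^sub>R z0 \<in> U" using d by (auto simp: \<eta>_def)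
  have "f c \<le> f p - \<eta>" if "c \<in> C" for c
  proof -
    have "c + \<eta> *\<^sub>R z0 - c0 \<in> D" unfolding D_def using that \<eta>(2) by blast
    then have "f (c + \<eta> *\<^sub>R z0 - c0) < 1" by (rule flt)
    moreover have "f (c + \<eta> *\<^sub>R z0 - c0) = f c + \<eta> - f c0"
      using fz0 f(1) by (simp add: linear_diff linear_add linear_scale)
    moreover have "f p - f c0 = 1" using fz0 f(1) by (simp add: z0_def linear_diff)
    ultimately show ?thesis by simp
  qed
  moreover have "f \<in> topdual" using f(1) cont by (simp add: topdual_def)
  ultimately show ?thesis using \<eta>(1) by (intro exI[of _ f] exI[of _ "f p - \<eta>"]) auto
qed


lemma lcs_prod:
  assumes lcs: "locally_convex_space TYPE('a::{real_vector, t2_space})"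
  shows "locally_convex_space TYPE('a \<times> real)"
  unfolding locally_convex_space_def
proof (intro conjI allI impI)
  have eq1: "(\<lambda>p::('a \<times> real) \<times> ('a \<times> real). fst p + snd p) =
    (\<lambda>p. ((\<lambda>q::'a \<times> 'a. fst q + snd q) (fst (fst p), fst (snd p)), snd (fst p) + snd (snd p)))"
    by (auto simp: fun_eq_iff)
  show "continuous_on UNIV (\<lambda>p::('a \<times> real) \<times> ('a \<times> real). fst p + snd p)"
    unfolding eq1
    by (intro continuous_on_Pair continuous_on_compose2[OF lcs_add[OF lcs]]) (auto intro!: continuous_intros)
  have eq2: "(\<lambda>p::real \<times> ('a \<times> real). fst p *\<^sub>R snd p) =
    (\<lambda>p. ((\<lambda>q::real \<times> 'a. fst q *\<^sub>R snd q) (fst p, fst (snd p)), fst p * snd (snd p)))"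
    by (auto simp: fun_eq_iff)
  show "continuous_on UNIV (\<lambda>p::real \<times> ('a \<times> real). fst p *\<^sub>R snd p)"
    unfolding eq2
    by (intro continuous_on_Pair continuous_on_compose2[OF lcs_mul[OF lcs]]) (auto intro!: continuous_intros)
next
  fix U :: "('a \<times> real) set"
  assume U: "open U \<and> 0 \<in> U"
  then obtain A B where AB: "open A" "open B" "(0::'a, 0::real) \<in> A \<times> B" "A \<times> B \<subseteq> U"
    by (metis open_prod_elim zero_prod_def)
  obtain V where V: "open V" "convex V" "0 \<in> V" "V \<subseteq> A" using lcs_base[OF lcs AB(1)] AB(3) by auto
  obtain e where e: "e > 0" "ball (0::real) e \<subseteq> B" using AB(2,3) open_contains_ball by force
  show "\<exists>W. open W \<and> convex W \<and> 0 \<in> W \<and> W \<subseteq> U"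
  proof (intro exI[of _ "V \<times> ball (0::real) e"] conjI)
    show "open (V \<times> ball (0::real) e)" using V(1) by (intro open_Times) auto
    show "convex (V \<times> ball (0::real) e)" using V(2) by (intro convex_Times convex_ball)
    show "0 \<in> V \<times> ball (0::real) e" using V(3) e(1) by (simp add: zero_prod_def)
    show "V \<times> ball (0::real) e \<subseteq> U" using V(4) e(2) AB(4) by auto
  qed
qed

lemma sep_prod:
  fixes E :: "('a::{real_vector, t2_space} \<times> real) set"
  assumes "locally_convex_space TYPE('a)" "closed E" "convex E" "p \<notin> E"
  shows "\<exists>F \<gamma>. F \<in> topdual \<and> (\<forall>q\<in>E. F q \<le> \<gamma>) \<and> \<gamma> < F p"
  by (rule separation[OF lcs_prod[OF assms(1)] assms(2-4)])




lemma biconj_le: "biconj_tri g x \<le> g x"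
  unfolding biconj_tri_def
proof (rule SUP_least)
  fix p :: "'a dualpt \<times> real"
  obtain \<xi> r where p: "p = (\<xi>, r)" by fastforce
  have "inf_diff (xi_r \<xi> r x) (g x) \<le> conj_tri g \<xi> r"
    unfolding conj_tri_def by (rule SUP_upper) simp
  then have "xi_r \<xi> r x \<le> inf_add (g x) (conj_tri g \<xi> r)" by (simp add: inf_diff_le_iff)
  then have "xi_r \<xi> r x \<le> inf_add (conj_tri g \<xi> r) (g x)" by (simp add: inf_add_commute)
  then show "inf_diff (xi_r (fst p) (snd p) x) (conj_tri g (fst p) (snd p)) \<le> g x"
    using p by (simp add: inf_diff_le_iff)
qed

lemma zero_topdual: "(\<lambda>x. 0) \<in> topdual"
  by (simp add: topdual_def linear_zero)

lemma hat_case: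
  assumes f: "f \<in> topdual" and dom: "\<And>x. g x < \<infinity> \<Longrightarrow> f x \<le> \<gamma>" and x0: "\<gamma> < f x0"
  shows "biconj_tri g x0 = \<infinity>"
proof -
  have c: "conj_tri g (Hat f) \<gamma> = -\<infinity>"
    unfolding conj_tri_def
  proof (rule antisym)
    show "(SUP x. inf_diff (xi_r (Hat f) \<gamma> x) (g x)) \<le> -\<infinity>"
    proof (rule SUP_least)
      fix x
      show "inf_diff (xi_r (Hat f) \<gamma> x) (g x) \<le> -\<infinity>"
      proof (cases "g x = \<infinity>")
        case True then show ?thesis by (simp add: inf_diff_eq)
      next
        case False
        then have "f x \<le> \<gamma>" using dom by (simp add: less_top[symmetric] top_ereal_def)
        then show ?thesis by (cases "g x") (simp_all add: inf_diff_eq)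
      qed
    qed
  qed simp
  have mem: "(Hat f, \<gamma>) \<in> Xtri \<times> (UNIV::real set)" using f by (simp add: Xtri_def)
  have "inf_diff (xi_r (Hat f) \<gamma> x0) (conj_tri g (Hat f) \<gamma>) \<le> biconj_tri g x0"
    unfolding biconj_tri_def using mem by (rule SUP_upper2) simp
  moreover have "inf_diff (xi_r (Hat f) \<gamma> x0) (conj_tri g (Hat f) \<gamma>) = \<infinity>"
    using x0 c by (simp add: inf_diff_eq)
  ultimately show ?thesis by (simp add: top_ereal_def[symmetric] top_unique)
qed

lemma lin_case:
  assumes f: "f \<in> topdual" and min: "\<And>x. ereal (f x - \<gamma>) \<le> g x"
  shows "ereal (f x0 - \<gamma>) \<le> biconj_tri g x0"
proof -
  have c: "conj_tri g (Lin f) \<gamma> \<le> 0"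
    unfolding conj_tri_def
  proof (rule SUP_least)
    fix x
    have "ereal (f x - \<gamma>) \<le> inf_add (g x) 0" using min[of x] by (simp add: inf_add_eq)
    then show "inf_diff (xi_r (Lin f) \<gamma> x) (g x) \<le> 0" by (simp add: inf_diff_le_iff)
  qed
  have mem: "(Lin f, \<gamma>) \<in> Xtri \<times> (UNIV::real set)" using f by (simp add: Xtri_def)
  have "inf_diff (xi_r (Lin f) \<gamma> x0) (conj_tri g (Lin f) \<gamma>) \<le> biconj_tri g x0"
    unfolding biconj_tri_def using mem by (rule SUP_upper2) simp
  moreover have "inf_diff (ereal (f x0 - \<gamma>)) 0 \<le> inf_diff (xi_r (Lin f) \<gamma> x0) (conj_tri g (Lin f) \<gamma>)"
    using c by (simp add: inf_diff_antimono)
  moreover have "inf_diff (ereal (f x0 - \<gamma>)) 0 = ereal (f x0 - \<gamma>)" by (simp add: inf_diff_eq)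
  ultimately show ?thesis by simp
qed

lemma convex_epi:
  assumes "convex_tri g" shows "convex (epi g)"
proof (rule convexI)
  fix p q :: "'a \<times> real" and u v :: real
  assume p: "p \<in> epi g" and q: "q \<in> epi g" and uv: "0 \<le> u" "0 \<le> v" "u + v = 1"
  obtain x1 r1 x2 r2 where pq: "p = (x1, r1)" "q = (x2, r2)" by fastforce
  have g1: "g x1 \<le> ereal r1" and g2: "g x2 \<le> ereal r2" using p q pq by (auto simp: epi_def)
  have "g (u *\<^sub>R x1 + v *\<^sub>R x2) \<le> ereal (u * r1 + v * r2)"
  proof (cases "u = 0 \<or> u = 1")
    case True
    then show ?thesis using uv g1 g2 by auto
  next
    case False
    then have u: "0 < u" "u < 1" and v: "v = 1 - u" using uv by auto
    have "g (u *\<^sub>R x1 + v *\<^sub>R x2) \<le> inf_add (ereal u * g x1) (ereal (1 - u) * g x2)"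
      using assms u v unfolding convex_tri_def by blast
    also have "\<dots> \<le> inf_add (ereal u * ereal r1) (ereal (1 - u) * ereal r2)"
      using u g1 g2 by (intro inf_add_mono ereal_mult_left_mono) auto
    also have "\<dots> = ereal (u * r1 + v * r2)" using v by (simp add: inf_add_eq)
    finally show ?thesis .
  qed
  then show "u *\<^sub>R p + v *\<^sub>R q \<in> epi g" using pq by (simp add: epi_def)
qed


lemma topdual_scale: "f \<in> topdual \<Longrightarrow> (\<lambda>x. c * f x) \<in> topdual"
  unfolding topdual_def by (auto intro!: continuous_intros simp: linear_iff algebra_simps)

theorem mainTheorem12:
  fixes g :: "'a::{real_vector, t2_space} \<Rightarrow> ereal"
  assumes "locally_convex_space TYPE('a)"
    and "closed_fun g"
    and "convex_tri g"
  shows "biconj_tri g = g"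
proof
  fix x0
  show "biconj_tri g x0 = g x0"
  proof (rule antisym)
    show "biconj_tri g x0 \<le> g x0" by (rule biconj_le)
    show "g x0 \<le> biconj_tri g x0"
    proof (rule dense_le)
      fix y assume y: "y < g x0"
      show "y \<le> biconj_tri g x0"
      proof (cases y)
        case MInf then show ?thesis by simp
      next
        case PInf then show ?thesis using y by simp
      next
        case (real \<beta>)
        have notin: "(x0, \<beta>) \<notin> epi g" using y real by (simp add: epi_def not_le)
        show ?thesis
        proof (cases "\<exists>x1. g x1 < \<infinity>")
          case False
          then have "biconj_tri g x0 = \<infinity>"
            by (intro hat_case[OF zero_topdual, of g "-1"]) auto
          then show ?thesis by simp
        next
          case True
          then obtain x1 where "g x1 < \<infinity>" by blast
          then obtain r1 where r1: "(x1, r1) \<in> epi g"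
            by (cases "g x1") (auto simp: epi_def)
          obtain F \<gamma> where F: "F \<in> topdual" and Fle: "\<And>q. q \<in> epi g \<Longrightarrow> F q \<le> \<gamma>"
            and Fgt: "\<gamma> < F (x0, \<beta>)"
            using sep_prod[OF assms(1) assms(2)[unfolded closed_fun_def] convex_epi[OF assms(3)] notin]
            by blast
          define f where "f x = F (x, 0)" for x
          define c where "c = F (0, 1)"
          have linF: "linear F" using F by (simp add: topdual_def)
          have Fxr: "F (x, r) = f x + r * c" for x r
          proof -
            have "(x, r) = (x, 0) + r *\<^sub>R (0, 1)" by simp
            then have "F (x, r) = F (x, 0) + r *\<^sub>R F (0, 1)"
              by (metis linF linear_add linear_scale)
            then show ?thesis by (simp add: f_def c_def)
          qed
          have fdual: "f \<in> topdual"
          proof -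
            have a: "F (x + y) = F x + F y" "F (c *\<^sub>R x) = c *\<^sub>R F x" for x y c
              using linF unfolding linear_iff by blast+
            have "linear f" unfolding linear_iff f_def
              using a(1)[of "(_, 0)" "(_, 0)"] a(2)[of _ "(_, 0)"] by simp
            moreover have "continuous_on UNIV f" unfolding f_def
              using F by (auto simp: topdual_def intro!: continuous_on_compose2[of UNIV F] continuous_intros)
            ultimately show ?thesis by (simp add: topdual_def)
          qed
          have ineq: "f x + r * c \<le> \<gamma>" if "g x \<le> ereal r" for x r
            using Fle[of "(x, r)"] that by (simp add: epi_def Fxr)
          have gt: "\<gamma> < f x0 + \<beta> * c" using Fgt by (simp add: Fxr)
          consider "c > 0" | "c = 0" | "c < 0" by linarith
          then show ?thesis
          proof cases
            case 1
            have g1: "g x1 \<le> ereal r1" using r1 by (simp add: epi_def)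
            define n where "n = max 0 ((\<gamma> - f x1 - r1 * c) / c + 1)"
            have "g x1 \<le> ereal (r1 + n)" using g1 by (rule order_trans) (simp add: n_def)
            then have "f x1 + (r1 + n) * c \<le> \<gamma>" by (rule ineq)
            moreover have "n * c > \<gamma> - f x1 - r1 * c"
            proof -
              have "n \<ge> (\<gamma> - f x1 - r1 * c) / c + 1" by (simp add: n_def)
              then have "n * c \<ge> ((\<gamma> - f x1 - r1 * c) / c + 1) * c" using 1 by (intro mult_right_mono) auto
              moreover have "((\<gamma> - f x1 - r1 * c) / c + 1) * c = \<gamma> - f x1 - r1 * c + c"
                using 1 by (simp add: field_simps)
              ultimately show ?thesis using 1 by linarith
            qed
            ultimately show ?thesis by (simp add: algebra_simps)
          next
            case 2
            have "biconj_tri g x0 = \<infinity>"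
            proof (rule hat_case[OF fdual])
              fix x assume "g x < \<infinity>"
              then obtain r where "g x \<le> ereal r" by (cases "g x") auto
              then show "f x \<le> \<gamma>" using ineq 2 by fastforce
            next
              show "\<gamma> < f x0" using gt 2 by simp
            qed
            then show ?thesis by simp
          next
            case 3
            define f' where "f' x = (- 1 / c) * f x" for x
            have f'd: "f' \<in> topdual" unfolding f'_def by (rule topdual_scale[OF fdual])
            have min: "ereal (f' x - \<gamma> / (- c)) \<le> g x" for x
            proof (cases "g x")
              case (real r)
              have "f x + r * c \<le> \<gamma>" using ineq real by simp
              then have "(f x - \<gamma>) / (- c) \<le> r" using 3 by (simp add: field_simps)
              then show ?thesis using real 3 by (simp add: f'_def field_simps)
            next
              case PInf then show ?thesis by simp
            next
              case MInf
              define r where "r = (\<gamma> - f x) / c - 1"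
              have "f x + r * c \<le> \<gamma>" using ineq MInf by simp
              moreover have "r * c = \<gamma> - f x - c" using 3 by (simp add: r_def field_simps)
              ultimately show ?thesis using 3 by simp
            qed
            have "ereal (f' x0 - \<gamma> / (- c)) \<le> biconj_tri g x0" by (rule lin_case[OF f'd min])
            moreover have "\<beta> < f' x0 - \<gamma> / (- c)"
              using gt 3 by (simp add: f'_def field_simps)
            ultimately show ?thesis using real by (metis ereal_less_eq(3) less_imp_le order_trans)
          qed
        qed
      qed
    qed
  qed
qed

end
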